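(* For every complex $z$, \[ \cosh(\pi z)=\sum_{n\ge0}\frac{\prod_{j=0}^{n-1}(j^2+9z^2)}{(2n)!}, \] and, equivalently via Euler's transformation, $\cosh(\pi z)$ equals the continued fraction with $a(0)=1$, $a(1)=2$, $a(n)=5n^2-4n+1+9z^2$ for $n\ge2$, $b(0)=9z^2$, $b(n)=-2n(2n-1)(n^2+9z^2)$ for $n\ge1$.
   Context: For sequences $a(n),b(n)$, the continued fraction is $a(0)+\cfrac{b(0)}{a(1)+\cfrac{b(1)}{a(2)+\cdots}}$; the empty product equals $1$. *)

theory Defs
  imports Complex_Main
begin

text \<open>Continued fraction a(0) + b(0)/(a(1) + b(1)/(a(2) + ...)).
  Its n-th convergent is P_n / Q_n, given by the fundamental recurrences
  P_{-1} = 1, P_0 = a 0, P_{n+1} = a(n+1) P_n + b(n) P_{n-1},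
  Q_{-1} = 0, Q_0 = 1,   Q_{n+1} = a(n+1) Q_n + b(n) Q_{n-1}.
  Here cf_num a b (Suc n) = P_n and cf_num a b 0 = P_{-1} (same for cf_den).\<close>

fun cf_num :: "(nat \<Rightarrow> 'a::field) \<Rightarrow> (nat \<Rightarrow> 'a) \<Rightarrow> nat \<Rightarrow> 'a" where
  "cf_num a b 0 = 1"
| "cf_num a b (Suc 0) = a 0"
| "cf_num a b (Suc (Suc n)) = a (Suc n) * cf_num a b (Suc n) + b n * cf_num a b n"

fun cf_den :: "(nat \<Rightarrow> 'a::field) \<Rightarrow> (nat \<Rightarrow> 'a) \<Rightarrow> nat \<Rightarrow> 'a" where
  "cf_den a b 0 = 0"
| "cf_den a b (Suc 0) = 1"
| "cf_den a b (Suc (Suc n)) = a (Suc n) * cf_den a b (Suc n) + b n * cf_den a b n"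

definition cf_convergent :: "(nat \<Rightarrow> 'a::field) \<Rightarrow> (nat \<Rightarrow> 'a) \<Rightarrow> nat \<Rightarrow> 'a" where
  "cf_convergent a b n = cf_num a b (Suc n) / cf_den a b (Suc n)"

definition cf_converges_to :: "(nat \<Rightarrow> 'a::{field,topological_space}) \<Rightarrow> (nat \<Rightarrow> 'a) \<Rightarrow> 'a \<Rightarrow> bool" where
  "cf_converges_to a b x \<longleftrightarrow> (cf_convergent a b \<longlonglongrightarrow> x)"

end

theory Submission imports Defs "HOL-Complex_Analysis.Complex_Analysis" "HOL-Computational_Algebra.Formal_Power_Series"
begin

definition cc :: "complex \<Rightarrow> nat \<Rightarrow> complex" where
  "cc w n = (\<Prod>j<n. of_nat j ^ 2 + w) / of_nat (fact (2 * n))"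

lemma fact_2Suc: "fact (2 * Suc n) = (2*n+2) * (2*n+1) * (fact (2*n) :: nat)"
proof -
  have "2 * Suc n = Suc (Suc (2*n))" by simp
  then show ?thesis by (simp only: fact_Suc) (simp add: algebra_simps)
qed

lemma n2: "cmod (2 * of_nat n + 2) = 2 * real n + 2"
proof -
  have "(2 * of_nat n + 2 :: complex) = of_real (2 * real n + 2)" by simp
  then show ?thesis by (simp only: norm_of_real; simp)
qed

lemma n1: "cmod (2 * of_nat n + 1) = 2 * real n + 1"
proof -
  have "(2 * of_nat n + 1 :: complex) = of_real (2 * real n + 1)" by simp
  then show ?thesis by (simp only: norm_of_real; simp)
qed

lemma dnz: "((2 * of_nat n+2) * (2 * of_nat n+1) :: complex) \<noteq> 0"
proof -
  have "cmod ((2 * of_nat n+2) * (2 * of_nat n+1) :: complex) \<noteq> 0" 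
    by (simp only: norm_mult n1 n2) (simp add: add_pos_pos)
  then show ?thesis by auto
qed

lemma cc_rec: "cc w (Suc n) * ((2 * of_nat n+2) * (2 * of_nat n+1)) = (of_nat n ^ 2 + w) * cc w n"
proof -
  define D :: complex where "D = (2 * of_nat n+2) * (2 * of_nat n+1)"
  define F :: complex where "F = of_nat (fact (2*n))"
  define P where "P = (\<Prod>j<n. of_nat j ^ 2 + w)"
  have nz: "F \<noteq> 0" by (simp add: F_def)
  have Dnz: "D \<noteq> 0" using dnz D_def by simp
  have Fs: "of_nat (fact (2 * Suc n)) = D * F"
    unfolding D_def F_def by (simp only: fact_2Suc of_nat_mult) (simp add: algebra_simps)
  have "cc w (Suc n) = P * (of_nat n ^ 2 + w) / (D * F)"
    unfolding cc_def Fs P_def by simp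
  then have "cc w (Suc n) * D = P * (of_nat n ^ 2 + w) / F" using Dnz nz by simp
  also have "\<dots> = (of_nat n ^ 2 + w) * cc w n" unfolding cc_def P_def F_def by simp
  finally show ?thesis unfolding D_def .
qed

lemma canc: "(d::real) \<noteq> 0 \<Longrightarrow> a * d * x / d = a * x" by simp

lemma cc_0: "cc w 0 = 1" by (simp add: cc_def)

lemma cc_summable: "summable (\<lambda>n. cc w n * 3 ^ n)"
proof -
  obtain N :: nat where N: "real N \<ge> 6 * norm w + 1" by (meson real_arch_simple)
  show ?thesis
  proof (rule summable_ratio_test[of "7/8" N])
    fix n assume n: "n \<ge> N"
    have nr: "real n \<ge> 6 * norm w + 1" using n N by linarith
    have eq: "cc w (Suc n) = (of_nat n ^ 2 + w) * cc w n / ((2* of_nat n+2) * (2* of_nat n+1))"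
    proof -
      show ?thesis by (subst eq_divide_eq) (use cc_rec[of w n] dnz[of n] in auto)
    qed
    have nu: "norm (of_nat n ^ 2 + w :: complex) \<le> real n ^ 2 + norm w"
      by (metis norm_of_nat norm_power norm_triangle_ineq)
    have key: "3 * (real n ^ 2 + norm w) \<le> 7/8 * ((2* real n+2)*(2* real n+1))"
    proof -
      have n1: "real n \<ge> 1" using nr norm_ge_zero[of w] by linarith
      have "real n * 1 \<le> real n * real n" by (rule mult_left_mono) (use n1 in auto)
      then have "real n ^ 2 \<ge> real n" by (simp add: power2_eq_square)
      then show ?thesis using nr by (simp add: power2_eq_square algebra_simps)
    qed
    have "norm (cc w (Suc n) * 3 ^ Suc n) = 3 * norm (of_nat n ^ 2 + w :: complex) * norm (cc w n * 3^n) / ((2* real n+2)*(2* real n+1))"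
      unfolding eq by (simp add: norm_mult norm_divide n1 n2 norm_power)
    also have "\<dots> \<le> 3 * (real n ^ 2 + norm w) * norm (cc w n * 3^n) / ((2* real n+2)*(2* real n+1))"
      by (intro divide_right_mono mult_right_mono mult_left_mono nu) auto
    also have "\<dots> \<le> 7/8 * ((2* real n+2)*(2* real n+1)) * norm (cc w n * 3^n) / ((2* real n+2)*(2* real n+1))"
      by (intro divide_right_mono mult_right_mono key) auto
    also have "\<dots> = 7/8 * norm (cc w n * 3^n)"
    proof -
      have p: "(2 * real n+2)*(2 * real n+1) \<noteq> 0" by (simp add: add_pos_pos)
      show ?thesis by (rule canc[OF p, of "7/8" "norm (cc w n * 3^n)"])
    qed
    finally show "norm (cc w (Suc n) * 3 ^ Suc n) \<le> 7/8 * norm (cc w n * 3^n)" .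
  qed simp
qed


definition GG :: "complex \<Rightarrow> complex fps" where "GG w = Abs_fps (cc w)"

lemma GG_rad: "ereal 3 \<le> fps_conv_radius (GG w)"
proof -
  have "norm (3::complex) \<le> conv_radius (cc w)"
    by (rule conv_radius_geI) (rule cc_summable)
  then show ?thesis by (simp add: GG_def fps_conv_radius_def)
qed

lemma GG_ode:
  "fps_const 4 * (fps_X * fps_deriv (fps_deriv (GG w))) - fps_X * (fps_X * fps_deriv (fps_deriv (GG w)))
   + fps_const 2 * fps_deriv (GG w) - fps_X * fps_deriv (GG w) = fps_const w * GG w"
proof (rule fps_ext)
  fix n
  consider "n = 0" | "n = Suc 0" | m where "n = Suc (Suc m)" by (metis not0_implies_Suc)
  then show "(fps_const 4 * (fps_X * fps_deriv (fps_deriv (GG w))) - fps_X * (fps_X * fps_deriv (fps_deriv (GG w)))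
   + fps_const 2 * fps_deriv (GG w) - fps_X * fps_deriv (GG w)) $ n = (fps_const w * GG w) $ n"
  proof cases
    case 1
    have "cc w 1 * 2 = w" using cc_rec[of w 0] by (simp add: cc_0)
    then show ?thesis using 1 by (simp add: GG_def cc_0 algebra_simps)
  next
    case 2
    have "cc w 2 * 12 = (1 + w) * cc w 1" using cc_rec[of w 1] by (simp add: numeral_eq_Suc)
    then show ?thesis using 2 by (simp add: GG_def algebra_simps numeral_eq_Suc)
  next
    case 3
    have r: "cc w (Suc (Suc (Suc m))) * ((2 * of_nat (Suc (Suc m))+2) * (2 * of_nat (Suc (Suc m))+1)) 
      = (of_nat (Suc (Suc m)) ^ 2 + w) * cc w (Suc (Suc m))" by (rule cc_rec)
    show ?thesis using 3 r by (simp add: GG_def algebra_simps power2_eq_square)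
  qed
qed


lemma rad_mult: "norm z < fps_conv_radius f \<Longrightarrow> norm z < fps_conv_radius g \<Longrightarrow> norm z < fps_conv_radius (f * g)"
  using fps_conv_radius_mult[of f g] by (simp add: min_def split: if_splits)
lemma rad_add: "norm z < fps_conv_radius f \<Longrightarrow> norm z < fps_conv_radius g \<Longrightarrow> norm z < fps_conv_radius (f + g)"
  using fps_conv_radius_add[of f g] by (simp add: min_def split: if_splits)
lemma rad_diff: "norm z < fps_conv_radius f \<Longrightarrow> norm z < fps_conv_radius g \<Longrightarrow> norm z < fps_conv_radius (f - g)"
  using fps_conv_radius_diff[of f g] by (simp add: min_def split: if_splits)

lemma rad3:
  fixes y :: complex assumes "norm y < 3"
  shows "norm y < fps_conv_radius (GG w)" "norm y < fps_conv_radius (fps_deriv (GG w))"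
    "norm y < fps_conv_radius (fps_deriv (fps_deriv (GG w)))"
proof -
  have a: "ereal (norm y) < ereal 3" using assms by simp
  show 1: "norm y < fps_conv_radius (GG w)" using a GG_rad[of w] by (meson less_le_trans)
  show 2: "norm y < fps_conv_radius (fps_deriv (GG w))" using 1 fps_conv_radius_deriv[of "GG w"] by (meson less_le_trans)
  show "norm y < fps_conv_radius (fps_deriv (fps_deriv (GG w)))" using 2 fps_conv_radius_deriv[of "fps_deriv (GG w)"] by (meson less_le_trans)
qed

lemma ode_eval:
  fixes y :: complex assumes "norm y < 3"
  shows "4 * (y * eval_fps (fps_deriv (fps_deriv (GG w))) y) - y * (y * eval_fps (fps_deriv (fps_deriv (GG w))) y)
     + 2 * eval_fps (fps_deriv (GG w)) y - y * eval_fps (fps_deriv (GG w)) y = w * eval_fps (GG w) y"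
proof -
  note r = rad3[OF assms, of w]
  have "eval_fps (fps_const 4 * (fps_X * fps_deriv (fps_deriv (GG w))) - fps_X * (fps_X * fps_deriv (fps_deriv (GG w)))
   + fps_const 2 * fps_deriv (GG w) - fps_X * fps_deriv (GG w)) y = eval_fps (fps_const w * GG w) y"
    by (simp only: GG_ode)
  then show ?thesis
    using r by (simp add: eval_fps_mult eval_fps_add eval_fps_diff rad_mult rad_add rad_diff)
qed


definition yy :: "complex \<Rightarrow> complex" where "yy p = 2 - 2 * cos p"
definition hh :: "complex \<Rightarrow> complex \<Rightarrow> complex" where "hh w p = eval_fps (GG w) (yy p)"
definition hh1 :: "complex \<Rightarrow> complex \<Rightarrow> complex" where
  "hh1 w p = eval_fps (fps_deriv (GG w)) (yy p) * (2 * sin p)"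

lemma yy_deriv: "(yy has_field_derivative 2 * sin p) (at p)"
  unfolding yy_def by (auto intro!: derivative_eq_intros)

lemma hh_deriv: assumes "norm (yy p) < 3" shows "(hh w has_field_derivative hh1 w p) (at p)"
proof -
  have "((\<lambda>p. eval_fps (GG w) (yy p)) has_field_derivative eval_fps (fps_deriv (GG w)) (yy p) * (2 * sin p)) (at p)"
    by (rule DERIV_chain2[OF has_field_derivative_eval_fps yy_deriv]) (rule rad3(1)[OF assms])
  then show ?thesis unfolding hh_def[abs_def] hh1_def .
qed

lemma hh1_deriv: assumes "norm (yy p) < 3" shows "(hh1 w has_field_derivative w * hh w p) (at p)"
proof -
  have d1: "((\<lambda>p. eval_fps (fps_deriv (GG w)) (yy p)) has_field_derivative eval_fps (fps_deriv (fps_deriv (GG w))) (yy p) * (2 * sin p)) (at p)"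
    by (rule DERIV_chain2[OF has_field_derivative_eval_fps yy_deriv]) (rule rad3(2)[OF assms])
  have d2: "((\<lambda>p. 2 * sin p) has_field_derivative 2 * cos p) (at p)"
    by (auto intro!: derivative_eq_intros)
  have "(hh1 w has_field_derivative eval_fps (fps_deriv (fps_deriv (GG w))) (yy p) * (2 * sin p) * (2 * sin p)
      + 2 * cos p * eval_fps (fps_deriv (GG w)) (yy p)) (at p)"
    unfolding hh1_def[abs_def] by (rule DERIV_mult[OF d1 d2])
  moreover have "eval_fps (fps_deriv (fps_deriv (GG w))) (yy p) * (2 * sin p) * (2 * sin p)
      + 2 * cos p * eval_fps (fps_deriv (GG w)) (yy p) = w * hh w p"
  proof -
    have e: "sin p * sin p = 1 - cos p * cos p" by (metis add_diff_cancel_left' sin_cos_squared_add3)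
    have s: "(2 * sin p) * (2 * sin p) = 4 * yy p - yy p * yy p"
    proof -
      have "(2 * sin p) * (2 * sin p) = 4 * (sin p * sin p)" by (simp add: algebra_simps)
      also have "\<dots> = 4 * (1 - cos p * cos p)" by (simp only: e)
      also have "\<dots> = 4 * yy p - yy p * yy p" unfolding yy_def by (simp add: algebra_simps)
      finally show ?thesis .
    qed
    have c: "2 * cos p = 2 - yy p" unfolding yy_def by simp
    define A where "A = eval_fps (fps_deriv (fps_deriv (GG w))) (yy p)"
    define B where "B = eval_fps (fps_deriv (GG w)) (yy p)"
    have o: "4 * (yy p * A) - yy p * (yy p * A) + 2 * B - yy p * B = w * hh w p"
      using ode_eval[OF assms, of w] unfolding hh_def A_def B_def .
    have "A * (2 * sin p) * (2 * sin p) = A * ((2 * sin p) * (2 * sin p))" by (rule mult.assoc)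
    also have "\<dots> = A * (4 * yy p - yy p * yy p)" by (simp only: s)
    finally have "A * (2 * sin p) * (2 * sin p) + 2 * cos p * B = A * (4 * yy p - yy p * yy p) + (2 - yy p) * B"
      by (simp only: c)
    also have "\<dots> = w * hh w p" using o by (simp add: algebra_simps)
    finally show ?thesis unfolding A_def B_def .
  qed
  ultimately show ?thesis by simp
qed


lemma yy_S: assumes "x \<in> closed_segment 0 (complex_of_real (pi/3))" shows "norm (yy x) < 3"
proof -
  obtain u where u: "0 \<le> u" "u \<le> 1" "x = (1 - u) *\<^sub>R 0 + u *\<^sub>R complex_of_real (pi/3)"
    using assms in_segment(1) by blast
  define t where "t = u * (pi/3)"
  have x: "x = of_real t" using u(3) unfolding t_def by (simp add: scaleR_conv_of_real)
  have t0: "0 \<le> t" "t \<le> pi/2" unfolding t_def using u(1,2) pi_gt_zero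
    by (auto intro!: mult_nonneg_nonneg)
  have c: "0 \<le> cos t" "cos t \<le> 1" using t0 by (auto intro!: cos_ge_zero)
  have "yy x = of_real (2 - 2 * cos t)" unfolding yy_def x cos_of_real by simp
  then have "norm (yy x) = \<bar>2 - 2 * cos t\<bar>" by (simp only: norm_of_real)
  then show ?thesis using c by simp
qed

lemma main_ode:
  assumes w: "w = s ^ 2" and x: "x \<in> closed_segment 0 (complex_of_real (pi/3))"
  shows "hh w x = cosh (s * x)"
proof -
  define S where "S = closed_segment 0 (complex_of_real (pi/3))"
  define D where "D x = hh w x - cosh (s * x)" for x
  define D1 where "D1 x = hh1 w x - s * sinh (s * x)" for x
  have cd: "((\<lambda>x. cosh (s * x)) has_field_derivative s * sinh (s * x)) (at x)" for x
    by (auto intro!: derivative_eq_intros)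
  have sd: "((\<lambda>x. s * sinh (s * x)) has_field_derivative s * (s * cosh (s * x))) (at x)" for x
    by (auto intro!: derivative_eq_intros)
  have dD: "(D has_field_derivative D1 x) (at x)" if "x \<in> S" for x
    unfolding D_def[abs_def] D1_def
    by (rule DERIV_diff[OF hh_deriv cd]) (use yy_S that S_def in auto)
  have dD1: "(D1 has_field_derivative s^2 * D x) (at x)" if "x \<in> S" for x
  proof -
    have "(D1 has_field_derivative w * hh w x - s * (s * cosh (s * x))) (at x)"
      unfolding D1_def[abs_def]
      by (rule DERIV_diff[OF hh1_deriv sd]) (use yy_S that S_def in auto)
    moreover have "w * hh w x - s * (s * cosh (s * x)) = s^2 * D x"
      unfolding D_def w by (simp add: algebra_simps power2_eq_square)
    ultimately show ?thesis by simp
  qed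
  have S0: "0 \<in> S" unfolding S_def by simp
  have D0: "D 0 = 0" unfolding D_def hh_def yy_def by (simp add: eval_fps_at_0 GG_def cc_0)
  have D10: "D1 0 = 0" unfolding D1_def hh1_def by simp
  define K where "K x = (D1 x - s * D x) * exp (s * x)" for x
  have "\<exists>c. \<forall>x\<in>S. K x = c"
  proof (rule has_field_derivative_zero_constant)
    show "convex S" unfolding S_def by simp
    fix x assume xS: "x \<in> S"
    have ed: "((\<lambda>x. exp (s * x)) has_field_derivative s * exp (s * x)) (at x)"
      by (auto intro!: derivative_eq_intros)
    have "((\<lambda>x. D1 x - s * D x) has_field_derivative s^2 * D x - s * D1 x) (at x)"
      by (intro DERIV_diff DERIV_cmult dD1 dD xS)
    then have "(K has_field_derivative (s^2 * D x - s * D1 x) * exp (s * x) + s * exp (s * x) * (D1 x - s * D x)) (at x)"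
      unfolding K_def[abs_def] using ed by (rule DERIV_mult)
    moreover have "(s^2 * D x - s * D1 x) * exp (s * x) + s * exp (s * x) * (D1 x - s * D x) = 0"
      by (simp add: algebra_simps power2_eq_square)
    ultimately show "(K has_field_derivative 0) (at x within S)"
      using has_field_derivative_at_within by fastforce
  qed
  then obtain c where c: "\<forall>x\<in>S. K x = c" by blast
  have "c = 0" using c S0 D0 D10 unfolding K_def by force
  then have KD: "D1 x = s * D x" if "x \<in> S" for x using c that unfolding K_def by simp
  define M where "M x = D x * exp (- (s * x))" for x
  have "\<exists>c. \<forall>x\<in>S. M x = c"
  proof (rule has_field_derivative_zero_constant)
    show "convex S" unfolding S_def by simp
    fix x assume xS: "x \<in> S"
    have ed: "((\<lambda>x. exp (- (s * x))) has_field_derivative - s * exp (- (s * x))) (at x)"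
      by (auto intro!: derivative_eq_intros)
    have "(M has_field_derivative D1 x * exp (- (s * x)) + - s * exp (- (s * x)) * D x) (at x)"
      unfolding M_def[abs_def] using dD[OF xS] ed by (rule DERIV_mult)
    moreover have "D1 x * exp (- (s * x)) + - s * exp (- (s * x)) * D x = 0"
      using KD[OF xS] by (simp add: algebra_simps)
    ultimately show "(M has_field_derivative 0) (at x within S)"
      using has_field_derivative_at_within by fastforce
  qed
  then obtain c2 where c2: "\<forall>x\<in>S. M x = c2" by blast
  have "c2 = 0" using c2 S0 D0 unfolding M_def by force
  then have "M x = 0" using c2 x S_def by simp
  then have "D x = 0" unfolding M_def by simp
  then show ?thesis unfolding D_def by simp
qed


lemma Fsuc: "(of_nat (fact (2 * Suc n)) :: complex) = (2 * of_nat n+2) * (2 * of_nat n+1) * of_nat (fact (2*n))"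
  by (simp only: fact_2Suc of_nat_mult) (simp add: algebra_simps)

lemma cf_main:
  fixes w :: complex
  defines "A \<equiv> (\<lambda>n. if n = 0 then 1 else if n = 1 then 2 else 5 * of_nat n ^ 2 - 4 * of_nat n + 1 + w)"
    and "B \<equiv> (\<lambda>n. if n = 0 then w else - 2 * of_nat n * (2 * of_nat n - 1) * (of_nat n ^ 2 + w))"
  shows "(cf_den A B (Suc n) = of_nat (fact (2*n)) \<and> cf_num A B (Suc n) = of_nat (fact (2*n)) * (\<Sum>k\<le>n. cc w k))
    \<and> (cf_den A B (Suc (Suc n)) = of_nat (fact (2*Suc n)) \<and> cf_num A B (Suc (Suc n)) = of_nat (fact (2*Suc n)) * (\<Sum>k\<le>Suc n. cc w k))"
proof (induction n)
  case 0
  have c1: "cc w 1 * 2 = w" using cc_rec[of w 0] by (simp add: cc_0)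
  have f2: "(of_nat (fact (2 * Suc 0)) :: complex) = 2" using Fsuc[of 0] by simp
  show ?case using c1 unfolding f2 by (simp add: A_def B_def cc_0 algebra_simps)
next
  case (Suc m)
  define x :: complex where "x = of_nat m"
  define f :: complex where "f = of_nat (fact (2*m))"
  define a where "a = cc w (Suc m)"
  define b where "b = cc w (Suc (Suc m))"
  define S where "S = (\<Sum>k\<le>m. cc w k)"
  have F1: "(of_nat (fact (2 * Suc m)) :: complex) = (2*x+2)*(2*x+1)*f" unfolding x_def f_def by (rule Fsuc)
  have F2: "(of_nat (fact (2 * Suc (Suc m))) :: complex) = (2*x+4)*(2*x+3)*((2*x+2)*(2*x+1)*f)"
  proof -
    have "(of_nat (fact (2 * Suc (Suc m))) :: complex) = (2 * of_nat (Suc m)+2) * (2 * of_nat (Suc m)+1) * of_nat (fact (2*Suc m))" by (rule Fsuc)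
    also have "\<dots> = (2*x+4)*(2*x+3)* of_nat (fact (2*Suc m))" unfolding x_def by (simp add: algebra_simps)
    also have "\<dots> = (2*x+4)*(2*x+3)*((2*x+2)*(2*x+1)*f)" by (simp only: F1)
    finally show ?thesis .
  qed
  have hb: "b * ((2*x+4)*(2*x+3)) = ((x+1)^2 + w) * a"
    using cc_rec[of w "Suc m"] unfolding a_def b_def x_def by (simp add: algebra_simps)
  have S1: "(\<Sum>k\<le>Suc m. cc w k) = S + a" unfolding S_def a_def by simp
  have S2: "(\<Sum>k\<le>Suc (Suc m). cc w k) = S + a + b" unfolding S_def a_def b_def by simp
  have As: "A (Suc (Suc m)) = 5 * (x+2)^2 - 4 * (x+2) + 1 + w" unfolding A_def x_def by (simp add: add.commute)
  have Bs: "B (Suc m) = - 2 * (x+1) * (2 * (x+1) - 1) * ((x+1)^2 + w)" unfolding B_def x_def by (simp add: algebra_simps)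
  have IH1: "cf_den A B (Suc m) = f" "cf_num A B (Suc m) = f * S" using Suc.IH unfolding f_def S_def by auto
  have IH2: "cf_den A B (Suc (Suc m)) = (2*x+2)*(2*x+1)*f" "cf_num A B (Suc (Suc m)) = (2*x+2)*(2*x+1)*f * (S + a)"
    using Suc.IH F1 S1 by auto
  have den: "cf_den A B (Suc (Suc (Suc m))) = (2*x+4)*(2*x+3)*((2*x+2)*(2*x+1)*f)"
    by (simp only: cf_den.simps(3)[of A B "Suc m"] IH1 IH2 As Bs) (simp add: algebra_simps power2_eq_square)
  have e: "(2*x+4)*(2*x+3)*((2*x+2)*(2*x+1)*f) * (S + a + b)
      = (2*x+4)*(2*x+3)*((2*x+2)*(2*x+1)*f) * (S + a) + (2*x+2)*(2*x+1)*f * (b * ((2*x+4)*(2*x+3)))"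
    by (simp add: algebra_simps)
  have num: "cf_num A B (Suc (Suc (Suc m))) = (2*x+4)*(2*x+3)*((2*x+2)*(2*x+1)*f) * (S + a + b)"
    unfolding e hb
    by (simp only: cf_num.simps(3)[of A B "Suc m"] IH1 IH2 As Bs) (simp add: algebra_simps power2_eq_square)
  show ?case
  proof (intro conjI)
    show "cf_den A B (Suc (Suc m)) = of_nat (fact (2*Suc m))" using Suc.IH by blast
    show "cf_num A B (Suc (Suc m)) = of_nat (fact (2*Suc m)) * (\<Sum>k\<le>Suc m. cc w k)" using Suc.IH by blast
    show "cf_den A B (Suc (Suc (Suc m))) = of_nat (fact (2*Suc (Suc m)))" unfolding F2 by (rule den)
    show "cf_num A B (Suc (Suc (Suc m))) = of_nat (fact (2*Suc (Suc m))) * (\<Sum>k\<le>Suc (Suc m). cc w k)"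
      unfolding F2 S2 by (rule num)
  qed
qed


theorem mainTheorem18:
  fixes z :: complex
  shows "(\<lambda>n. (\<Prod>j<n. of_nat j ^ 2 + 9 * z ^ 2) / of_nat (fact (2 * n))) sums cosh (of_real pi * z)
       \<and> cf_converges_to
           (\<lambda>n. if n = 0 then 1 else if n = 1 then 2
                 else 5 * of_nat n ^ 2 - 4 * of_nat n + 1 + 9 * z ^ 2)
           (\<lambda>n. if n = 0 then 9 * z ^ 2
                 else - 2 * of_nat n * (2 * of_nat n - 1) * (of_nat n ^ 2 + 9 * z ^ 2))
           (cosh (of_real pi * z))"
proof -
  define w where "w = 9 * z ^ 2"
  have w3: "w = (3 * z) ^ 2" unfolding w_def by (simp add: power_mult_distrib)
  have p3: "complex_of_real (pi/3) \<in> closed_segment 0 (complex_of_real (pi/3))" by simp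
  have yy1: "yy (complex_of_real (pi/3)) = 1"
    unfolding yy_def cos_of_real cos_60 by simp
  have "hh w (complex_of_real (pi/3)) = cosh (3 * z * complex_of_real (pi/3))"
    by (rule main_ode[OF w3 p3])
  also have "3 * z * complex_of_real (pi/3) = of_real pi * z" by simp
  finally have hv: "hh w (complex_of_real (pi/3)) = cosh (of_real pi * z)" .
  have "(\<lambda>n. fps_nth (GG w) n * 1 ^ n) sums eval_fps (GG w) 1"
    by (rule sums_eval_fps) (rule rad3(1), simp)
  then have sm: "cc w sums cosh (of_real pi * z)"
    using hv yy1 unfolding hh_def GG_def by simp
  have cfm: "cf_convergent
           (\<lambda>n. if n = 0 then 1 else if n = 1 then 2
                 else 5 * of_nat n ^ 2 - 4 * of_nat n + 1 + w)
           (\<lambda>n. if n = 0 then w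
                 else - 2 * of_nat n * (2 * of_nat n - 1) * (of_nat n ^ 2 + w)) n = (\<Sum>k<Suc n. cc w k)" for n
    using cf_main[of w n] unfolding cf_convergent_def lessThan_Suc_atMost by simp
  have "(\<lambda>n. \<Sum>k<Suc n. cc w k) \<longlonglongrightarrow> cosh (of_real pi * z)"
    using sm unfolding sums_def by (rule LIMSEQ_Suc)
  then have cf: "cf_converges_to
           (\<lambda>n. if n = 0 then 1 else if n = 1 then 2
                 else 5 * of_nat n ^ 2 - 4 * of_nat n + 1 + w)
           (\<lambda>n. if n = 0 then w
                 else - 2 * of_nat n * (2 * of_nat n - 1) * (of_nat n ^ 2 + w))
           (cosh (of_real pi * z))"
    unfolding cf_converges_to_def cfm .
  show ?thesis using sm cf unfolding w_def cc_def[abs_def] by simp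
qed

end
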